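(* Let $P(\vec\alpha,\vec\beta,\vec\xi),P'(\vec\alpha,\vec\beta,\vec\xi)\in\mathcal{P}$ be two syntactically compositional predicates with the same parameters, and suppose $P'$ is stronger than $P$. Then the entailments $P'(\vec\alpha,\vec\beta,\vec\xi)\Rightarrow P(\vec\alpha,\vec\beta,\vec\xi)$ and $\exists\vec\beta.\ P'(\vec\alpha,\vec\beta,\vec\xi)\ast P(\vec\beta,\vec\gamma,\vec\xi)\Rightarrow P(\vec\alpha,\vec\gamma,\vec\xi)$ hold (for any pair $\vec\gamma$ of a location and a data variable).
   Context: Separation logic setting: location variables (interpreted in a set $\mathbb{L}$ of locations, with a constant ${\sf nil}$) and data variables; pointer fields $\mathcal{F}$ and data fields $\mathcal{D}$. A state is $(s,h)$ with $s$ a stack assigning values to variables and $h$ a finite partial heap mapping (location, field) pairs to locations or data values. Formulas: pure parts (location (dis)equalities and data constraints in a decidable theory), spatial parts $\mathtt{emp}$, $E\mapsto\rho$, predicate atoms, $\ast$ (separating conjunction over domain-disjoint heaps), with $\land,\lor,\exists$. Predicates are defined by finite sets of rules $Q(E,\vec F)::=\exists\vec Z.\Pi\land\Sigma$ with least-fixed-point semantics; an entailment $A\Rightarrow B$ means every $(s,h)$ satisfying $A$ satisfies $B$. Syntactic compositionality: $P$ has parameters $(\vec\alpha,\vec\beta,\vec\xi)$, $\vec\alpha=(E,C)$ (source), $\vec\beta=(F,H)$ (hole), $E,F$ location variables, $C,H$ data variables, $\vec\xi$ static parameters. $P$ is syntactically compositional if it has exactly one base rule $P(\vec\alpha,\vec\beta,\vec\xi)::=\alpha_1=\beta_1\land\alpha_2=\beta_2\land\mathtt{emp}$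 and at least one inductive rule, every inductive rule being of the form $P(\vec\alpha,\vec\beta,\vec\xi)::=\exists\vec Z.\ \Pi\land\Sigma_1\ast\Sigma_2\ast P(\vec\gamma,\vec\beta,\vec\xi)$ where $\Sigma_1$ is a nonempty separating conjunction of points-to atoms containing a unique points-to atom from $E$ and all location variables of $\vec Z$, whose Gaifman graph is a connected DAG rooted at $E$; $\Sigma_2$ is a possibly empty separating conjunction of predicate atoms whose first arguments are sink vertices of that graph; $\vec\gamma$ consists of variables of $\vec Z$; and the variables of $\vec\beta$ do not occur in $\Pi,\Sigma_1,\Sigma_2,\vec\gamma$. Stronger: $P'$ is stronger than $P$ if for each inductive rule $P'(\vec\alpha,\vec\beta,\vec\xi)::=\exists\vec Z.\ \Pi'\land\Sigma_1\ast\Sigma_2\ast P'(\vec\gamma,\vec\beta,\vec\xi)$ of $P'$ there is an inductive rule $P(\vec\alpha,\vec\beta,\vec\xi)::=\exists\vec Z.\ \Pi\land\Sigma_1\ast\Sigma_2\ast P(\vec\gamma,\vec\beta,\vec\xi)$ of $P$ (same $\vec Z,\Sigma_1,\Sigma_2,\vec\gamma$) such that $\Pi'\Rightarrow\Pi$ is valid. *)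

theory Defs
  imports Main
begin

datatype var = LVar nat | DVar nat

datatype ('l,'d) val = VL 'l | VD 'd

type_synonym ('l,'d) stack = "(nat \<Rightarrow> 'l) \<times> (nat \<Rightarrow> 'd)"

text \<open>A heap is a partial map from (location, field) pairs to values (finiteness of the
  domain is imposed in the entailment relation).\<close>
type_synonym ('l,'d,'f) heap = "('l \<times> 'f) \<Rightarrow> ('l,'d) val option"

fun eval :: "('l,'d) stack \<Rightarrow> var \<Rightarrow> ('l,'d) val" where
  "eval s (LVar n) = VL (fst s n)"
| "eval s (DVar n) = VD (snd s n)"

text \<open>Location terms (a location variable or nil), pure atoms. Data constraints are
  atoms of an arbitrary (decidable) data theory, given by symbols 'c with an interpretation.\<close>
datatype lterm = LNil | LV nat

datatype 'c pure =
    LEq lterm lterm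
  | LNeq lterm lterm
  | DEq nat nat
  | DCon 'c "nat list"

datatype ('f,'p) spat =
    Emp
  | PointsTo nat "('f \<times> var) list"
  | PredAt 'p "var list"

text \<open>A rule  Q(params) ::= \<exists>Z. \<Pi> \<and> \<Sigma>  (\<Pi> a conjunction of pure atoms,
  \<Sigma> a separating conjunction of spatial atoms).\<close>
record ('f,'p,'c) rule =
  rZ :: "var list"
  rpure :: "'c pure list"
  rspat :: "('f,'p) spat list"

record ('f,'p,'c) pdef =
  pparams :: "var list"
  prules :: "('f,'p,'c) rule list"

datatype ('f,'p,'c) form =
    FPure "'c pure"
  | FSp "('f,'p) spat"
  | FStar "('f,'p,'c) form" "('f,'p,'c) form"
  | FAnd "('f,'p,'c) form" "('f,'p,'c) form"
  | FOr "('f,'p,'c) form" "('f,'p,'c) form"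
  | FEx var "('f,'p,'c) form"

fun leval :: "'l \<Rightarrow> ('l,'d) stack \<Rightarrow> lterm \<Rightarrow> 'l" where
  "leval nil s LNil = nil"
| "leval nil s (LV n) = fst s n"

fun pure_sat :: "'l \<Rightarrow> ('c \<Rightarrow> 'd list \<Rightarrow> bool) \<Rightarrow> ('l,'d) stack \<Rightarrow> 'c pure \<Rightarrow> bool" where
  "pure_sat nil I s (LEq a b) = (leval nil s a = leval nil s b)"
| "pure_sat nil I s (LNeq a b) = (leval nil s a \<noteq> leval nil s b)"
| "pure_sat nil I s (DEq a b) = (snd s a = snd s b)"
| "pure_sat nil I s (DCon c ns) = I c (map (snd s) ns)"

fun sat_atom :: "('p \<Rightarrow> ('l,'d) val list \<Rightarrow> ('l,'d,'f) heap \<Rightarrow> bool)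
    \<Rightarrow> ('l,'d) stack \<Rightarrow> ('f,'p) spat \<Rightarrow> ('l,'d,'f) heap \<Rightarrow> bool" where
  "sat_atom R s Emp h = (h = Map.empty)"
| "sat_atom R s (PointsTo n rho) h =
     (dom h = {(fst s n, f) | f. f \<in> fst ` set rho} \<and>
      (\<forall>(f,v) \<in> set rho. h (fst s n, f) = Some (eval s v)))"
| "sat_atom R s (PredAt q vs) h = R q (map (eval s) vs) h"

fun sat_list :: "('p \<Rightarrow> ('l,'d) val list \<Rightarrow> ('l,'d,'f) heap \<Rightarrow> bool)
    \<Rightarrow> ('l,'d) stack \<Rightarrow> ('f,'p) spat list \<Rightarrow> ('l,'d,'f) heap \<Rightarrow> bool" where
  "sat_list R s [] h = (h = Map.empty)"
| "sat_list R s (a # as) h =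
     (\<exists>h1 h2. dom h1 \<inter> dom h2 = {} \<and> h = h1 ++ h2 \<and> sat_atom R s a h1 \<and> sat_list R s as h2)"

lemma sat_atom_mono: "R \<le> R' \<Longrightarrow> sat_atom R s a h \<longrightarrow> sat_atom R' s a h"
  by (cases a) (auto simp: le_fun_def)

lemma sat_list_mono[mono]: "R \<le> R' \<Longrightarrow> sat_list R s as h \<longrightarrow> sat_list R' s as h"
proof (induction as arbitrary: h)
  case Nil then show ?case by simp
next
  case (Cons a as)
  show ?case
  proof
    assume "sat_list R s (a # as) h"
    then obtain h1 h2 where "dom h1 \<inter> dom h2 = {}" "h = h1 ++ h2" "sat_atom R s a h1" "sat_list R s as h2"
      by auto
    moreover have "sat_atom R' s a h1" using sat_atom_mono[OF Cons.prems] \<open>sat_atom R s a h1\<close> by blast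
    moreover have "sat_list R' s as h2" using Cons.IH[OF Cons.prems] \<open>sat_list R s as h2\<close> by blast
    ultimately show "sat_list R' s (a # as) h" by auto
  qed
qed

text \<open>Least-fixed-point semantics of a system of inductive definitions D (predicate
  names to definitions): Q(args) holds on h if some rule of Q is satisfied by a stack
  mapping the formal parameters to args (all other variables existentially quantified).\<close>
inductive holds :: "'l \<Rightarrow> ('c \<Rightarrow> 'd list \<Rightarrow> bool) \<Rightarrow> ('p \<Rightarrow> ('f,'p,'c) pdef)
    \<Rightarrow> 'p \<Rightarrow> ('l,'d) val list \<Rightarrow> ('l,'d,'f) heap \<Rightarrow> bool"
  for nil I D where
  "r \<in> set (prules (D q)) \<Longrightarrow> map (eval s) (pparams (D q)) = args
   \<Longrightarrow> (\<forall>a \<in> set (rpure r). pure_sat nil I s a)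
   \<Longrightarrow> sat_list (holds nil I D) s (rspat r) h
   \<Longrightarrow> holds nil I D q args h"

fun upd :: "('l,'d) stack \<Rightarrow> var \<Rightarrow> ('l,'d) val \<Rightarrow> ('l,'d) stack" where
  "upd s (LVar n) (VL l) = ((fst s)(n := l), snd s)"
| "upd s (DVar n) (VD d) = (fst s, (snd s)(n := d))"
| "upd s _ _ = s"

fun sort_ok :: "var \<Rightarrow> ('l,'d) val \<Rightarrow> bool" where
  "sort_ok (LVar _) (VL _) = True"
| "sort_ok (DVar _) (VD _) = True"
| "sort_ok _ _ = False"

fun fsat :: "'l \<Rightarrow> ('c \<Rightarrow> 'd list \<Rightarrow> bool) \<Rightarrow> ('p \<Rightarrow> ('f,'p,'c) pdef)
    \<Rightarrow> ('l,'d) stack \<Rightarrow> ('l,'d,'f) heap \<Rightarrow> ('f,'p,'c) form \<Rightarrow> bool" where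
  "fsat nil I D s h (FPure a) = pure_sat nil I s a"
| "fsat nil I D s h (FSp a) = sat_atom (holds nil I D) s a h"
| "fsat nil I D s h (FStar A B) =
     (\<exists>h1 h2. dom h1 \<inter> dom h2 = {} \<and> h = h1 ++ h2 \<and> fsat nil I D s h1 A \<and> fsat nil I D s h2 B)"
| "fsat nil I D s h (FAnd A B) = (fsat nil I D s h A \<and> fsat nil I D s h B)"
| "fsat nil I D s h (FOr A B) = (fsat nil I D s h A \<or> fsat nil I D s h B)"
| "fsat nil I D s h (FEx x A) = (\<exists>v. sort_ok x v \<and> fsat nil I D (upd s x v) h A)"

definition entails :: "'l \<Rightarrow> ('c \<Rightarrow> 'd list \<Rightarrow> bool) \<Rightarrow> ('p \<Rightarrow> ('f,'p,'c) pdef)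
    \<Rightarrow> ('f,'p,'c) form \<Rightarrow> ('f,'p,'c) form \<Rightarrow> bool" where
  "entails nil I D A B \<longleftrightarrow>
     (\<forall>s h. finite (dom h) \<longrightarrow> fsat nil I D s h A \<longrightarrow> fsat nil I D s h B)"

definition pvalid :: "'l \<Rightarrow> ('c \<Rightarrow> 'd list \<Rightarrow> bool) \<Rightarrow> 'c pure list \<Rightarrow> 'c pure list \<Rightarrow> bool" where
  "pvalid nil I P1 P2 \<longleftrightarrow>
     (\<forall>s. (\<forall>a \<in> set P1. pure_sat nil I s a) \<longrightarrow> (\<forall>a \<in> set P2. pure_sat nil I s a))"

fun lt_vars :: "lterm \<Rightarrow> var set" where
  "lt_vars LNil = {}"
| "lt_vars (LV n) = {LVar n}"

fun pure_vars :: "'c pure \<Rightarrow> var set" where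
  "pure_vars (LEq a b) = lt_vars a \<union> lt_vars b"
| "pure_vars (LNeq a b) = lt_vars a \<union> lt_vars b"
| "pure_vars (DEq a b) = {DVar a, DVar b}"
| "pure_vars (DCon c ns) = DVar ` set ns"

text \<open>\<Sigma>1 is given as a list of points-to atoms (source, field map).\<close>
definition pts_vars :: "(nat \<times> ('f \<times> var) list) list \<Rightarrow> var set" where
  "pts_vars s1 = (\<Union>(x,rho) \<in> set s1. insert (LVar x) (snd ` set rho))"

definition gaif_verts :: "(nat \<times> ('f \<times> var) list) list \<Rightarrow> nat set" where
  "gaif_verts s1 = {n. LVar n \<in> pts_vars s1}"

definition gaif_edges :: "(nat \<times> ('f \<times> var) list) list \<Rightarrow> (nat \<times> nat) set" where
  "gaif_edges s1 = {(x, y). \<exists>rho fl. (x, rho) \<in> set s1 \<and> (fl, LVar y) \<in> set rho}"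

definition base_rule :: "nat \<Rightarrow> nat \<Rightarrow> nat \<Rightarrow> nat \<Rightarrow> ('f,'p,'c) rule" where
  "base_rule e c f h = \<lparr>rZ = [], rpure = [LEq (LV e) (LV f), DEq c h], rspat = [Emp]\<rparr>"

definition ind_form ::
  "'p \<Rightarrow> nat \<Rightarrow> nat \<Rightarrow> nat \<Rightarrow> nat \<Rightarrow> var list \<Rightarrow> ('f,'p,'c) rule
   \<Rightarrow> var list \<Rightarrow> 'c pure list \<Rightarrow> (nat \<times> ('f \<times> var) list) list \<Rightarrow> ('p \<times> var list) list
   \<Rightarrow> nat \<Rightarrow> nat \<Rightarrow> bool" where
  "ind_form p e c f h xi r Z Pi s1 s2 gl gd \<longleftrightarrow>
     rZ r = Z \<and> rpure r = Pi \<and>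
     rspat r = map (\<lambda>(x,rho). PointsTo x rho) s1 @ map (\<lambda>(q,as). PredAt q as) s2
               @ [PredAt p ([LVar gl, DVar gd, LVar f, DVar h] @ xi)] \<and>
     \<comment> \<open>\<Sigma>1 nonempty, unique points-to from E, contains all location variables of Z\<close>
     s1 \<noteq> [] \<and> length (filter (\<lambda>(x,rho). x = e) s1) = 1 \<and>
     (\<forall>n. LVar n \<in> set Z \<longrightarrow> n \<in> gaif_verts s1) \<and>
     \<comment> \<open>Gaifman graph of \<Sigma>1 is a connected DAG rooted at E\<close>
     acyclic (gaif_edges s1) \<and> (\<forall>v \<in> gaif_verts s1. (e, v) \<in> (gaif_edges s1)\<^sup>*) \<and>
     \<comment> \<open>first arguments of \<Sigma>2 atoms are sink vertices\<close>
     (\<forall>(q,as) \<in> set s2. \<exists>v vs. as = LVar v # vs \<and> v \<in> gaif_verts s1 \<and>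
                                 (\<forall>w. (v, w) \<notin> gaif_edges s1)) \<and>
     \<comment> \<open>\<gamma> consists of variables of Z\<close>
     LVar gl \<in> set Z \<and> DVar gd \<in> set Z \<and>
     \<comment> \<open>the hole variables do not occur in \<Pi>, \<Sigma>1, \<Sigma>2, \<gamma>\<close>
     (let V = (\<Union>a \<in> set Pi. pure_vars a) \<union> pts_vars s1 \<union> (\<Union>(q,as) \<in> set s2. set as)
              \<union> {LVar gl, DVar gd}
      in LVar f \<notin> V \<and> DVar h \<notin> V)"

definition is_ind_rule :: "'p \<Rightarrow> nat \<Rightarrow> nat \<Rightarrow> nat \<Rightarrow> nat \<Rightarrow> var list \<Rightarrow> ('f,'p,'c) rule \<Rightarrow> bool" where
  "is_ind_rule p e c f h xi r \<longleftrightarrow> (\<exists>Z Pi s1 s2 gl gd. ind_form p e c f h xi r Z Pi s1 s2 gl gd)"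

definition synt_comp :: "('p \<Rightarrow> ('f,'p,'c) pdef) \<Rightarrow> 'p \<Rightarrow> bool" where
  "synt_comp D p \<longleftrightarrow>
     (\<exists>e c f h xi. pparams (D p) = [LVar e, DVar c, LVar f, DVar h] @ xi \<and>
        distinct (pparams (D p)) \<and>
        length (filter (\<lambda>r. r = base_rule e c f h) (prules (D p))) = 1 \<and>
        (\<exists>r \<in> set (prules (D p)). is_ind_rule p e c f h xi r) \<and>
        (\<forall>r \<in> set (prules (D p)). r = base_rule e c f h \<or> is_ind_rule p e c f h xi r))"

definition stronger :: "'l \<Rightarrow> ('c \<Rightarrow> 'd list \<Rightarrow> bool) \<Rightarrow> ('p \<Rightarrow> ('f,'p,'c) pdef) \<Rightarrow> 'p \<Rightarrow> 'p \<Rightarrow> bool" where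
  "stronger nil I D P' P \<longleftrightarrow>
     pparams (D P') = pparams (D P) \<and>
     (\<forall>e c f h xi. pparams (D P) = [LVar e, DVar c, LVar f, DVar h] @ xi \<longrightarrow>
        (\<forall>r' \<in> set (prules (D P')). \<forall>Z Pi' s1 s2 gl gd.
           ind_form P' e c f h xi r' Z Pi' s1 s2 gl gd \<longrightarrow>
           (\<exists>r \<in> set (prules (D P)). \<exists>Pi.
              ind_form P e c f h xi r Z Pi s1 s2 gl gd \<and> pvalid nil I Pi' Pi)))"

end

theory Submission
  imports Defs
begin

fun avars :: "('f,'p) spat \<Rightarrow> var set" where
  "avars Emp = {}"
| "avars (PointsTo n rho) = insert (LVar n) (snd ` set rho)"
| "avars (PredAt q vs) = set vs"

lemma eval_upd2:
  "eval ((fst s)(f:=l), (snd s)(h:=d)) v =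
     (if v = LVar f then VL l else if v = DVar h then VD d else eval s v)"
  by (cases v) auto

lemma map_eval_upd2:
  "LVar f \<notin> set vs \<Longrightarrow> DVar h \<notin> set vs \<Longrightarrow>
   map (eval ((fst s)(f:=l), (snd s)(h:=d))) vs = map (eval s) vs"
  by (induction vs) (auto simp: eval_upd2)

lemma sat_atom_upd2:
  assumes "LVar f \<notin> avars a" "DVar h \<notin> avars a"
  shows "sat_atom R ((fst s)(f:=l), (snd s)(h:=d)) a H = sat_atom R s a H"
proof (cases a)
  case (PointsTo n rho)
  have e: "\<forall>(fl,v)\<in>set rho. eval ((fst s)(f:=l), (snd s)(h:=d)) v = eval s v"
    using assms PointsTo by (force simp: eval_upd2)
  have "n \<noteq> f" using assms PointsTo by auto
  then show ?thesis using PointsTo e by (auto; fastforce)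
next
  case (PredAt q vs)
  then show ?thesis using assms by (simp add: map_eval_upd2)
qed simp

lemma lt_upd2: "LVar f \<notin> lt_vars t \<Longrightarrow>
   leval nil ((fst s)(f:=l), (snd s)(h:=d)) t = leval nil s t"
  by (cases t) auto

lemma pure_upd2:
  assumes "LVar f \<notin> pure_vars a" "DVar h \<notin> pure_vars a"
  shows "pure_sat nil I ((fst s)(f:=l), (snd s)(h:=d)) a = pure_sat nil I s a"
  using assms
proof (cases a)
  case (DCon c ns)
  then have "map ((snd s)(h:=d)) ns = map (snd s) ns" using assms by (auto intro!: map_cong)
  then show ?thesis using DCon by (simp only: pure_sat.simps snd_conv)
qed (auto simp: lt_upd2)

lemma sat_list_append:
  "sat_list R s (xs @ ys) H =
   (\<exists>h1 h2. dom h1 \<inter> dom h2 = {} \<and> H = h1 ++ h2 \<and> sat_list R s xs h1 \<and> sat_list R s ys h2)"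
proof (induction xs arbitrary: H)
  case Nil
  then show ?case by auto
next
  case (Cons a xs)
  show ?case
  proof
    assume "sat_list R s ((a # xs) @ ys) H"
    then obtain h1 h2 where A: "dom h1 \<inter> dom h2 = {}" "H = h1 ++ h2" "sat_atom R s a h1"
      "sat_list R s (xs @ ys) h2" by auto
    then obtain g1 g2 where B: "dom g1 \<inter> dom g2 = {}" "h2 = g1 ++ g2" "sat_list R s xs g1"
      "sat_list R s ys g2" using Cons.IH by blast
    have "sat_list R s (a # xs) (h1 ++ g1)" using A B by auto
    moreover have "dom (h1 ++ g1) \<inter> dom g2 = {}" using A B by auto
    moreover have "H = (h1 ++ g1) ++ g2" using A B by simp
    ultimately show "\<exists>h1 h2. dom h1 \<inter> dom h2 = {} \<and> H = h1 ++ h2 \<and> sat_list R s (a # xs) h1 \<and> sat_list R s ys h2"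
      using B by blast
  next
    assume "\<exists>h1 h2. dom h1 \<inter> dom h2 = {} \<and> H = h1 ++ h2 \<and> sat_list R s (a # xs) h1 \<and> sat_list R s ys h2"
    then obtain h1 h2 where A: "dom h1 \<inter> dom h2 = {}" "H = h1 ++ h2" "sat_list R s (a # xs) h1"
      "sat_list R s ys h2" by blast
    then obtain g1 g2 where B: "dom g1 \<inter> dom g2 = {}" "h1 = g1 ++ g2" "sat_atom R s a g1"
      "sat_list R s xs g2" by auto
    have "dom g2 \<inter> dom h2 = {}" using A(1) B(2) by auto
    then have "sat_list R s (xs @ ys) (g2 ++ h2)" using Cons.IH B(4) A(4) by blast
    moreover have "dom g1 \<inter> dom (g2 ++ h2) = {}" using A B by auto
    moreover have "H = g1 ++ (g2 ++ h2)" using A B by simp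
    ultimately show "sat_list R s ((a # xs) @ ys) H" using B by auto
  qed
qed

lemma sat_list_single: "sat_list R s [a] H = sat_atom R s a H"
  by auto

lemma sat_list_transfer:
  "(\<forall>a\<in>set A. \<forall>H. sat_atom R s a H \<longrightarrow> sat_atom R' s' a H) \<Longrightarrow>
   sat_list R s A H \<Longrightarrow> sat_list R' s' A H"
  by (induction A arbitrary: H) auto

lemma sc_data:
  assumes "synt_comp D P" "pparams (D P) = [LVar e, DVar c, LVar f, DVar h] @ xi"
  shows "distinct ([LVar e, DVar c, LVar f, DVar h] @ xi)"
    "base_rule e c f h \<in> set (prules (D P))"
    "\<forall>r\<in>set (prules (D P)). r = base_rule e c f h \<or> is_ind_rule P e c f h xi r"
proof -
  obtain e0 c0 f0 h0 xi0 where A: "pparams (D P) = [LVar e0, DVar c0, LVar f0, DVar h0] @ xi0"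
    "distinct (pparams (D P))"
    "length (filter (\<lambda>r. r = base_rule e0 c0 f0 h0) (prules (D P))) = 1"
    "\<forall>r \<in> set (prules (D P)). r = base_rule e0 c0 f0 h0 \<or> is_ind_rule P e0 c0 f0 h0 xi0 r"
    using assms(1) unfolding synt_comp_def by blast
  have eq: "e0 = e" "c0 = c" "f0 = f" "h0 = h" "xi0 = xi" using A(1) assms(2) by auto
  show "distinct ([LVar e, DVar c, LVar f, DVar h] @ xi)" using A(2) assms(2) by simp
  show "\<forall>r\<in>set (prules (D P)). r = base_rule e c f h \<or> is_ind_rule P e c f h xi r"
    using A(4) eq by simp
  have "filter (\<lambda>r. r = base_rule e c f h) (prules (D P)) \<noteq> []" using A(3) eq by auto
  then show "base_rule e c f h \<in> set (prules (D P))" by (metis (mono_tags) filter_False)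
qed

lemma ind_form_vars:
  assumes "ind_form p e c f h xi r Z Pi s1 s2 gl gd"
  shows "\<forall>a \<in> set (map (\<lambda>(x,rho). PointsTo x rho) s1 @ map (\<lambda>(q,as). PredAt q as) s2).
            LVar f \<notin> avars a \<and> DVar h \<notin> avars a"
    "\<forall>a \<in> set Pi. LVar f \<notin> pure_vars a \<and> DVar h \<notin> pure_vars a"
    "gl \<noteq> f" "gd \<noteq> h"
proof -
  let ?V = "(\<Union>a \<in> set Pi. pure_vars a) \<union> pts_vars s1 \<union> (\<Union>(q,as) \<in> set s2. set as)
              \<union> {LVar gl, DVar gd}"
  have n: "LVar f \<notin> ?V" "DVar h \<notin> ?V" using assms unfolding ind_form_def Let_def by blast+
  show "gl \<noteq> f" "gd \<noteq> h" using n by auto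
  show "\<forall>a \<in> set Pi. LVar f \<notin> pure_vars a \<and> DVar h \<notin> pure_vars a" using n by blast
  have "\<forall>a \<in> set (map (\<lambda>(x,rho). PointsTo x rho) s1 @ map (\<lambda>(q,as). PredAt q as) s2). avars a \<subseteq> ?V"
  proof
    fix a assume "a \<in> set (map (\<lambda>(x,rho). PointsTo x rho) s1 @ map (\<lambda>(q,as). PredAt q as) s2)"
    then consider (a) x rho where "(x,rho) \<in> set s1" "a = PointsTo x rho"
      | (b) q as where "(q,as) \<in> set s2" "a = PredAt q as" by auto
    then show "avars a \<subseteq> ?V"
    proof cases
      case a
      then have "avars a \<subseteq> pts_vars s1" unfolding pts_vars_def by auto
      then show ?thesis by blast
    next
      case b
      then have "avars a \<subseteq> (\<Union>(q,as) \<in> set s2. set as)" by auto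
      then show ?thesis by blast
    qed
  qed
  then show "\<forall>a \<in> set (map (\<lambda>(x,rho). PointsTo x rho) s1 @ map (\<lambda>(q,as). PredAt q as) s2).
            LVar f \<notin> avars a \<and> DVar h \<notin> avars a" using n by blast
qed

lemma holds_le: "(\<lambda>q args h. holds nil I D q args h \<and> X q args h) \<le> holds nil I D"
  unfolding le_fun_def le_bool_def by blast

lemma comp:
  assumes sc: "synt_comp D P" and par: "pparams (D P) = [LVar e, DVar c, LVar f, DVar h] @ xi"
  shows "holds nil I D q args H1 \<Longrightarrow> q = P \<Longrightarrow> args = [VL le, VD dc, VL lf, VD dh] @ xs
    \<Longrightarrow> holds nil I D P ([VL lf, VD dh, VL lg, VD dk] @ xs) H2 \<Longrightarrow> dom H1 \<inter> dom H2 = {}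
    \<Longrightarrow> holds nil I D P ([VL le, VD dc, VL lg, VD dk] @ xs) (H1 ++ H2)"
proof (induction arbitrary: le dc lf dh xs H2 lg dk rule: holds.induct)
  case (1 r q s args H)
  note D = sc_data[OF sc par]
  have xin: "LVar f \<notin> set xi" "DVar h \<notin> set xi" "e \<noteq> f" "c \<noteq> h" using D(1) by auto
  have ar: "map (eval s) ([LVar e, DVar c, LVar f, DVar h] @ xi) = [VL le, VD dc, VL lf, VD dh] @ xs"
    using 1(2,5,6) par by simp
  then have sv: "fst s e = le" "snd s c = dc" "fst s f = lf" "snd s h = dh" "map (eval s) xi = xs"
    by auto
  have "r = base_rule e c f h \<or> is_ind_rule P e c f h xi r" using D(3) 1(1,5) by auto
  then show ?case
  proof
    assume b: "r = base_rule e c f h"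
    then have "fst s e = fst s f" "snd s c = snd s h" using 1(3) by (auto simp: base_rule_def)
    moreover have "H = Map.empty" using 1(4) b by (auto simp: base_rule_def)
    ultimately show ?thesis using 1(7) sv by simp
  next
    assume "is_ind_rule P e c f h xi r"
    then obtain Z Pi s1 s2 gl gd where ind: "ind_form P e c f h xi r Z Pi s1 s2 gl gd"
      unfolding is_ind_rule_def by blast
    define A where "A = map (\<lambda>(x,rho). PointsTo x rho) s1 @ map (\<lambda>(q,as). PredAt q as) s2"
    define L where "L = [LVar gl, DVar gd, LVar f, DVar h] @ xi"
    have sp: "rspat r = A @ [PredAt P L]" "rpure r = Pi" using ind unfolding ind_form_def A_def L_def by auto
    note V = ind_form_vars[OF ind, folded A_def]
    define R where "R = (\<lambda>x1 x2 x3.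
       holds nil I D x1 x2 x3 \<and>
       (x1 = P \<longrightarrow>
        (\<forall>x xa xb xc xd.
            x2 = [VL x, VD xa, VL xb, VD xc] @ xd \<longrightarrow>
            (\<forall>xe xf xg.
                holds nil I D P ([VL xb, VD xc, VL xf, VD xg] @ xd) xe \<longrightarrow>
                dom x3 \<inter> dom xe = {} \<longrightarrow>
                holds nil I D P ([VL x, VD xa, VL xf, VD xg] @ xd)
                 (x3 ++ xe)))))"
    have Rle: "R \<le> holds nil I D" unfolding R_def le_fun_def le_bool_def by blast
    have "sat_list R s (rspat r) H" using 1(4) unfolding R_def .
    then obtain Ha Hb where HH: "dom Ha \<inter> dom Hb = {}" "H = Ha ++ Hb"
      "sat_list R s A Ha" "sat_atom R s (PredAt P L) Hb"
      unfolding sp sat_list_append sat_list_single by blast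
    have dj: "dom Hb \<inter> dom H2 = {}" using 1 HH by auto
    have ev: "map (eval s) L = [VL (fst s gl), VD (snd s gd), VL lf, VD dh] @ xs"
      using sv unfolding L_def by simp
    have hl: "holds nil I D P ([VL (fst s gl), VD (snd s gd), VL lg, VD dk] @ xs) (Hb ++ H2)"
    proof -
      have "R P ([VL (fst s gl), VD (snd s gd), VL lf, VD dh] @ xs) Hb" using HH(4) ev by simp
      then show ?thesis using 1(7) dj unfolding R_def by blast
    qed
    define s' where "s' = ((fst s)(f:=lg), (snd s)(h:=dk))"
    have args': "map (eval s') (pparams (D P)) = [VL le, VD dc, VL lg, VD dk] @ xs"
      unfolding s'_def par using xin sv by (simp add: map_eval_upd2)
    have pure': "\<forall>a\<in>set (rpure r). pure_sat nil I s' a"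
      using 1(3) V(2) sp unfolding s'_def by (simp add: pure_upd2)
    have la: "sat_list (holds nil I D) s' A Ha"
      apply (rule sat_list_transfer[OF _ HH(3)])
      using V(1) sat_atom_mono[OF Rle] unfolding s'_def by (simp add: sat_atom_upd2)
    have ll: "map (eval s') L = [VL (fst s gl), VD (snd s gd), VL lg, VD dk] @ xs"
      unfolding s'_def L_def using V(3,4) xin sv by (simp add: map_eval_upd2 eval_upd2)
    have at: "sat_atom (holds nil I D) s' (PredAt P L) (Hb ++ H2)" using ll hl by simp
    have "dom Ha \<inter> dom (Hb ++ H2) = {}" using HH(1) 1(8) HH(2) by auto
    then have "sat_list (holds nil I D) s' (rspat r) (Ha ++ (Hb ++ H2))"
      unfolding sp sat_list_append sat_list_single
      using la at by blast
    then have "holds nil I D P ([VL le, VD dc, VL lg, VD dk] @ xs) (Ha ++ (Hb ++ H2))"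
    proof -
      have rr: "r \<in> set (prules (D P))" using 1(1,5) by simp
      show ?thesis by (rule holds.intros[OF rr args' pure' \<open>sat_list (holds nil I D) s' (rspat r) (Ha ++ (Hb ++ H2))\<close>])
    qed
    then show ?thesis using HH(2) by simp
  qed
qed

lemma strong:
  assumes sc: "synt_comp D P" and sc': "synt_comp D P'" and pp: "pparams (D P') = pparams (D P)"
    and par: "pparams (D P) = [LVar e, DVar c, LVar f, DVar h] @ xi"
    and st: "stronger nil I D P' P"
  shows "holds nil I D q args H \<Longrightarrow> q = P' \<Longrightarrow> holds nil I D P args H"
proof (induction rule: holds.induct)
  case (1 r q s args H)
  define R where "R = (\<lambda>x1 x2 x3. holds nil I D x1 x2 x3 \<and> (x1 = P' \<longrightarrow> holds nil I D P x2 x3))"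
  have Rle: "R \<le> holds nil I D" unfolding R_def le_fun_def le_bool_def by blast
  have sl: "sat_list R s (rspat r) H" using 1(4) unfolding R_def .
  note D = sc_data[OF sc par]
  note D' = sc_data[OF sc' pp[unfolded par]]
  have ar: "map (eval s) (pparams (D P)) = args" using 1(2,5) pp by simp
  have "r = base_rule e c f h \<or> is_ind_rule P' e c f h xi r" using D'(3) 1(1,5) by auto
  then show ?case
  proof
    assume b: "r = base_rule e c f h"
    have "sat_list (holds nil I D) s (rspat r) H" using sat_list_mono[OF Rle] sl by blast
    then show ?thesis using holds.intros[where D=D and q=P and s=s, OF D(2) ar] 1(3) b by blast
  next
    assume "is_ind_rule P' e c f h xi r"
    then obtain Z Pi' s1 s2 gl gd where ind: "ind_form P' e c f h xi r Z Pi' s1 s2 gl gd"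
      unfolding is_ind_rule_def by blast
    obtain r2 Pi where r2: "r2 \<in> set (prules (D P))" "ind_form P e c f h xi r2 Z Pi s1 s2 gl gd"
      "pvalid nil I Pi' Pi"
      using st par ind 1(1,5) unfolding stronger_def by blast
    define A where "A = map (\<lambda>(x,rho). PointsTo x rho) s1 @ map (\<lambda>(q,as). PredAt q as) s2"
    define L where "L = [LVar gl, DVar gd, LVar f, DVar h] @ xi"
    have sp: "rspat r = A @ [PredAt P' L]" "rpure r = Pi'" using ind unfolding ind_form_def A_def L_def by auto
    have sp2: "rspat r2 = A @ [PredAt P L]" "rpure r2 = Pi" using r2(2) unfolding ind_form_def A_def L_def by auto
    obtain Ha Hb where HH: "dom Ha \<inter> dom Hb = {}" "H = Ha ++ Hb"
      "sat_list R s A Ha" "sat_atom R s (PredAt P' L) Hb"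
      using sl unfolding sp sat_list_append sat_list_single by blast
    have la: "sat_list (holds nil I D) s A Ha" using sat_list_mono[OF Rle] HH(3) by blast
    have at: "sat_atom (holds nil I D) s (PredAt P L) Hb" using HH(4) unfolding R_def by simp
    have "sat_list (holds nil I D) s (rspat r2) H"
      unfolding sp2 sat_list_append sat_list_single using la at HH(1,2) by blast
    moreover have "\<forall>a\<in>set (rpure r2). pure_sat nil I s a"
      using 1(3) r2(3) sp sp2 unfolding pvalid_def by blast
    ultimately show ?thesis using holds.intros[where D=D and q=P and s=s, OF r2(1) ar] by blast
  qed
qed

lemma sort_okL: "sort_ok (LVar n) v \<longleftrightarrow> (\<exists>l. v = VL l)"
  by (cases v) auto
lemma sort_okD: "sort_ok (DVar n) v \<longleftrightarrow> (\<exists>d. v = VD d)"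
  by (cases v) auto

theorem theorem3:
  fixes nil :: 'l and I :: "'c \<Rightarrow> 'd list \<Rightarrow> bool" and D :: "'p \<Rightarrow> ('f,'p,'c) pdef"
    and P P' :: 'p and e c f h g k :: nat and xi :: "var list"
  assumes "synt_comp D P" and "synt_comp D P'"
    and "pparams (D P') = pparams (D P)"
    and "pparams (D P) = [LVar e, DVar c, LVar f, DVar h] @ xi"
    and "stronger nil I D P' P"
    and "g \<noteq> f" and "k \<noteq> h"
  shows "entails nil I D (FSp (PredAt P' ([LVar e, DVar c, LVar f, DVar h] @ xi)))
                         (FSp (PredAt P ([LVar e, DVar c, LVar f, DVar h] @ xi)))
       \<and> entails nil I D
           (FEx (LVar f) (FEx (DVar h)
              (FStar (FSp (PredAt P' ([LVar e, DVar c, LVar f, DVar h] @ xi)))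
                     (FSp (PredAt P ([LVar f, DVar h, LVar g, DVar k] @ xi))))))
           (FSp (PredAt P ([LVar e, DVar c, LVar g, DVar k] @ xi)))"
proof
  note S = strong[OF assms(1,2,3,4,5)]
  show "entails nil I D (FSp (PredAt P' ([LVar e, DVar c, LVar f, DVar h] @ xi)))
                         (FSp (PredAt P ([LVar e, DVar c, LVar f, DVar h] @ xi)))"
    unfolding entails_def using S by simp
  note D = sc_data[OF assms(1,4)]
  have xin: "LVar f \<notin> set xi" "DVar h \<notin> set xi" "e \<noteq> f" "c \<noteq> h" using D(1) by auto
  show "entails nil I D
           (FEx (LVar f) (FEx (DVar h)
              (FStar (FSp (PredAt P' ([LVar e, DVar c, LVar f, DVar h] @ xi)))
                     (FSp (PredAt P ([LVar f, DVar h, LVar g, DVar k] @ xi))))))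
           (FSp (PredAt P ([LVar e, DVar c, LVar g, DVar k] @ xi)))"
    unfolding entails_def
  proof (intro allI impI)
    fix s H
    assume "fsat nil I D s H
           (FEx (LVar f) (FEx (DVar h)
              (FStar (FSp (PredAt P' ([LVar e, DVar c, LVar f, DVar h] @ xi)))
                     (FSp (PredAt P ([LVar f, DVar h, LVar g, DVar k] @ xi))))))"
    then obtain l d h1 h2 where A: "dom h1 \<inter> dom h2 = {}" "H = h1 ++ h2"
      "holds nil I D P' (map (eval ((fst s)(f:=l), (snd s)(h:=d))) ([LVar e, DVar c, LVar f, DVar h] @ xi)) h1"
      "holds nil I D P (map (eval ((fst s)(f:=l), (snd s)(h:=d))) ([LVar f, DVar h, LVar g, DVar k] @ xi)) h2"
      by (auto simp: sort_okL sort_okD)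
    have a1: "holds nil I D P ([VL (fst s e), VD (snd s c), VL l, VD d] @ map (eval s) xi) h1"
      using S[OF A(3)] xin by (simp add: map_eval_upd2)
    have a2: "holds nil I D P ([VL l, VD d, VL (fst s g), VD (snd s k)] @ map (eval s) xi) h2"
      using A(4) xin assms(6,7) by (simp add: map_eval_upd2)
    have "holds nil I D P ([VL (fst s e), VD (snd s c), VL (fst s g), VD (snd s k)] @ map (eval s) xi) (h1 ++ h2)"
      by (rule comp[OF assms(1,4) a1 refl refl a2 A(1)])
    then show "fsat nil I D s H (FSp (PredAt P ([LVar e, DVar c, LVar g, DVar k] @ xi)))"
      using A(2) by simp
  qed
qed

end
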